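(* Let $n \geqslant 1$ and let $\lambda$ be an integer partition with $\lambda_1+\ell(\lambda)-1=n$. Let $c=(1,2,\ldots,n+1)\in\mathfrak{S}_{n+1}$ (an $(n+1)$-cycle). Then $\mathcal{RSK}_{\lambda,c}$ coincides with the Hillman–Grassl correspondence $\mathcal{HG}_\lambda$.
   Context: Ferrers diagram $\mathrm{Fer}(\lambda)=\{(i,j)\in(\mathbb{N}^* )^2:j\le\lambda_i\}$. Diagonals: $D_k(\lambda)=\{(i,j)\in\mathrm{Fer}(\lambda):\lambda_1+i-j=k\}$ for $k=1,\dots,n$, $\delta_k=\max\{\min(i,j):(i,j)\in D_k(\lambda)\}$, and $(i,j)\in D_k(\lambda)$ has coordinates $\langle k,\delta\rangle_\lambda$ with $\delta=\delta_k-\min(i,j)+1$. $\square_k(\lambda)$ is the order ideal of $\mathrm{Fer}(\lambda)$ (componentwise order) generated by $D_k(\lambda)$. Row/column labels: label the unit segments of the south-east boundary of $\mathrm{Fer}(\lambda)$ by $1,\dots,n+1$ from top-right to bottom-left; rows and columns inherit the labels of their boundary segments; $\mathbf L$ = row labels, $\mathbf R$ = column labels; $[\ell,r]$ denotes the box with row label $\ell$ and column label $r$ (it exists iff $\ell<r$). Greene–Kleitman invariant: for an acyclic directed graph $G$ and $g:G_0\to\mathbb{N}$, $M_t$ ($t\ge1$) is the maximum over $t$-tuples of (possibly one-vertex) directed paths of the sum of $g$ over the union of their vertex sets, $M_0=0$, $\mathrm{GK}_G(g)=(M_t-M_{t-1})_{t\ge1}$. Hillman–Grassl correspondence (in the form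 used here): let $H_\lambda$ be the directed graph on $\mathrm{Fer}(\lambda)$ with arrows $(i,j)\to(i,j+1)$ and $(i+1,j)\to(i,j)$; for a filling $f$, $\mathcal{HG}_\lambda(f)(\langle k,\delta\rangle_\lambda)$ is the $\delta$-th part of $\mathrm{GK}$ of $f$ restricted to the full subgraph of $H_\lambda$ on $\square_k(\lambda)$. $\mathcal{RSK}_{\lambda,c}$: $\mathrm{AR}(c)$ is the directed graph on transpositions $(i,j)$, $1\le i<j\le n+1$, with arrows $(i,j)\to(i,c(j))$ if $i<c(j)$ and $(i,j)\to(c(i),j)$ if $c(i)<j$; $\mathrm{AR}^{[k]}(c)$ is its full subgraph on $(\ell,r)$ with $\ell\le k<r$. For a filling $f$ of $\lambda$, $\mathrm{rep}_{\lambda,c}(f)(\ell,r)=f([\ell,r])$ if $\ell\in\mathbf L,r\in\mathbf R,\ell<r$ and $0$ otherwise; $\mathcal{RSK}_{\lambda,c}(f)(\langle k,\delta\rangle_\lambda)$ is the $\delta$-th part of $\mathrm{GK}_{\mathrm{AR}^{[k]}(c)}$ of the restriction of $\mathrm{rep}_{\lambda,c}(f)$ to $\mathrm{AR}^{[k]}(c)$. *)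

theory Defs
  imports Main
begin

(* A partition lambda is a list of positive naturals, weakly decreasing;
   lambda_i = lam ! (i-1) for 1 <= i <= length lam, lambda_1 = hd lam. *)
definition is_partition :: "nat list \<Rightarrow> bool" where
  "is_partition lam \<longleftrightarrow> sorted_wrt (\<ge>) lam \<and> 0 \<notin> set lam"

definition fer :: "nat list \<Rightarrow> (nat \<times> nat) set" where
  "fer lam = {(i,j). 1 \<le> i \<and> i \<le> length lam \<and> 1 \<le> j \<and> j \<le> lam ! (i - 1)}"

definition diag :: "nat list \<Rightarrow> nat \<Rightarrow> (nat \<times> nat) set" where
  "diag lam k = {(i,j) \<in> fer lam. hd lam + i = k + j}"

definition delta_max :: "nat list \<Rightarrow> nat \<Rightarrow> nat" where
  "delta_max lam k = Max ((\<lambda>(i,j). min i j) ` diag lam k)"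

definition coord_k :: "nat list \<Rightarrow> nat \<times> nat \<Rightarrow> nat" where
  "coord_k lam b = hd lam + fst b - snd b"

definition coord_delta :: "nat list \<Rightarrow> nat \<times> nat \<Rightarrow> nat" where
  "coord_delta lam b = delta_max lam (coord_k lam b) - min (fst b) (snd b) + 1"

definition square :: "nat list \<Rightarrow> nat \<Rightarrow> (nat \<times> nat) set" where
  "square lam k = {b \<in> fer lam. \<exists>d \<in> diag lam k. fst b \<le> fst d \<and> snd b \<le> snd d}"

(* ---- Greene--Kleitman invariant ----
   A directed graph is given by a vertex set V and an arrow relation E;
   we always use the full subgraph on V. *)
definition is_dpath :: "'a set \<Rightarrow> ('a \<Rightarrow> 'a \<Rightarrow> bool) \<Rightarrow> 'a list \<Rightarrow> bool" where
  "is_dpath V E p \<longleftrightarrow> p \<noteq> [] \<and> set p \<subseteq> V \<and> successively E p"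

definition gk_M :: "'a set \<Rightarrow> ('a \<Rightarrow> 'a \<Rightarrow> bool) \<Rightarrow> ('a \<Rightarrow> nat) \<Rightarrow> nat \<Rightarrow> nat" where
  "gk_M V E g t = Max (insert 0
     {sum g (\<Union>p\<in>set ps. set p) | ps. length ps = t \<and> (\<forall>p\<in>set ps. is_dpath V E p)})"

definition gk :: "'a set \<Rightarrow> ('a \<Rightarrow> 'a \<Rightarrow> bool) \<Rightarrow> ('a \<Rightarrow> nat) \<Rightarrow> nat \<Rightarrow> nat" where
  "gk V E g t = gk_M V E g t - gk_M V E g (t - 1)"

definition hg_arrow :: "nat \<times> nat \<Rightarrow> nat \<times> nat \<Rightarrow> bool" where
  "hg_arrow a b \<longleftrightarrow> (fst b = fst a \<and> snd b = Suc (snd a)) \<or> (fst a = Suc (fst b) \<and> snd a = snd b)"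

(* fillings are functions on boxes; only values on Fer(lambda) matter,
   and the output filling is 0 outside Fer(lambda) *)
definition HG :: "nat list \<Rightarrow> (nat \<times> nat \<Rightarrow> nat) \<Rightarrow> (nat \<times> nat \<Rightarrow> nat)" where
  "HG lam f = (\<lambda>b. if b \<in> fer lam
      then gk (square lam (coord_k lam b)) hg_arrow f (coord_delta lam b) else 0)"

(* ---- row / column labels ----
   The south-east boundary consists of one vertical segment per row i
   (its east end) and one horizontal segment per column j (its south end).
   Walking from top-right to bottom-left, the segment of row i comes before
   that of column j iff j <= lambda_i.  The label of a segment is the number
   of segments up to and including it. *)
definition row_label :: "nat list \<Rightarrow> nat \<Rightarrow> nat" where
  "row_label lam i = i + card {j. lam ! (i - 1) < j \<and> j \<le> hd lam}"

definition col_label :: "nat list \<Rightarrow> nat \<Rightarrow> nat" where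
  "col_label lam j = card {i. 1 \<le> i \<and> i \<le> length lam \<and> j \<le> lam ! (i - 1)} + (hd lam + 1 - j)"

definition Lset :: "nat list \<Rightarrow> nat set" where
  "Lset lam = row_label lam ` {1..length lam}"

definition Rset :: "nat list \<Rightarrow> nat set" where
  "Rset lam = col_label lam ` {1..hd lam}"

definition label_box :: "nat list \<Rightarrow> nat \<Rightarrow> nat \<Rightarrow> nat \<times> nat" where
  "label_box lam l r = (the_inv_into {1..length lam} (row_label lam) l,
                        the_inv_into {1..hd lam} (col_label lam) r)"

definition rep :: "nat list \<Rightarrow> (nat \<times> nat \<Rightarrow> nat) \<Rightarrow> nat \<times> nat \<Rightarrow> nat" where
  "rep lam f = (\<lambda>(l,r). if l \<in> Lset lam \<and> r \<in> Rset lam \<and> l < r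
       then f (label_box lam l r) else 0)"

definition ar_arrow :: "(nat \<Rightarrow> nat) \<Rightarrow> nat \<times> nat \<Rightarrow> nat \<times> nat \<Rightarrow> bool" where
  "ar_arrow c a b \<longleftrightarrow>
     (fst b = fst a \<and> snd b = c (snd a) \<and> fst a < c (snd a)) \<or>
     (snd b = snd a \<and> fst b = c (fst a) \<and> c (fst a) < snd a)"

(* vertex set of AR^[k](c): transpositions (l,r), 1 <= l < r <= n+1, l <= k < r *)
definition ar_k :: "nat \<Rightarrow> nat \<Rightarrow> (nat \<times> nat) set" where
  "ar_k n k = {(l,r). 1 \<le> l \<and> l < r \<and> r \<le> n + 1 \<and> l \<le> k \<and> k < r}"

definition part_n :: "nat list \<Rightarrow> nat" where
  "part_n lam = hd lam + length lam - 1"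

definition RSK :: "nat list \<Rightarrow> (nat \<Rightarrow> nat) \<Rightarrow> (nat \<times> nat \<Rightarrow> nat) \<Rightarrow> (nat \<times> nat \<Rightarrow> nat)" where
  "RSK lam c f = (\<lambda>b. if b \<in> fer lam
      then gk (ar_k (part_n lam) (coord_k lam b)) (ar_arrow c) (rep lam f) (coord_delta lam b)
      else 0)"

definition long_cycle :: "nat \<Rightarrow> nat \<Rightarrow> nat" where
  "long_cycle n i = (if i \<le> n then i + 1 else 1)"

end

theory Submission
  imports Defs
begin


lemma path_sorted:
  assumes "is_dpath V E p" "\<And>x y. x \<in> V \<Longrightarrow> y \<in> V \<Longrightarrow> E x y \<Longrightarrow> R x y" "transp R"
  shows "sorted_wrt R p"
proof -
  have "successively R p"
    using assms(1) by (auto simp: is_dpath_def intro!: successively_mono[of E] assms(2))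
  then show ?thesis using successively_conv_sorted_wrt[OF assms(3)] by blast
qed

lemma connect:
  assumes step: "\<And>a b. a \<in> V \<Longrightarrow> b \<in> V \<Longrightarrow> R a b \<Longrightarrow> a \<noteq> b \<Longrightarrow>
     \<exists>a'\<in>V. E a a' \<and> R a' b \<and> mu a' b < (mu a b::nat)"
  shows "a \<in> V \<Longrightarrow> b \<in> V \<Longrightarrow> R a b \<Longrightarrow> \<exists>p. is_dpath V E p \<and> hd p = a \<and> last p = b"
proof (induction "mu a b" arbitrary: a rule: less_induct)
  case less
  show ?case
  proof (cases "a = b")
    case True
    then show ?thesis using less.prems by (intro exI[of _ "[a]"]) (auto simp: is_dpath_def)
  next
    case False
    then obtain a' where a': "a' \<in> V" "E a a'" "R a' b" "mu a' b < mu a b"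
      using step less.prems by blast
    then obtain p where p: "is_dpath V E p" "hd p = a'" "last p = b"
      using less.hyps[of a'] less.prems by blast
    then have "is_dpath V E (a # p)" using a' less.prems
      by (cases p) (auto simp: is_dpath_def)
    then show ?thesis using p by (intro exI[of _ "a # p"]) (auto simp: is_dpath_def)
  qed
qed

lemma cover:
  assumes conn: "\<And>a b. a \<in> V \<Longrightarrow> b \<in> V \<Longrightarrow> R a b \<Longrightarrow> \<exists>p. is_dpath V E p \<and> hd p = a \<and> last p = b"
  shows "xs \<noteq> [] \<Longrightarrow> set xs \<subseteq> V \<Longrightarrow> sorted_wrt R xs \<Longrightarrow>
     \<exists>q. is_dpath V E q \<and> hd q = hd xs \<and> set xs \<subseteq> set q"
proof (induction xs)
  case Nil then show ?case by simp
next
  case (Cons x ys)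
  show ?case
  proof (cases "ys = []")
    case True
    then show ?thesis using Cons.prems by (intro exI[of _ "[x]"]) (auto simp: is_dpath_def)
  next
    case False
    then obtain q where q: "is_dpath V E q" "hd q = hd ys" "set ys \<subseteq> set q" using Cons by auto
    have "R x (hd ys)" using Cons.prems False by (cases ys) auto
    moreover have "hd ys \<in> V" using Cons.prems False by (cases ys) auto
    ultimately obtain p where p: "is_dpath V E p" "hd p = x" "last p = hd ys"
      using conn[of x "hd ys"] Cons.prems by auto
    obtain q' where q': "q = hd ys # q'" using q by (metis is_dpath_def list.collapse)
    have "successively E (p @ q')"
      using p q q' by (auto simp: is_dpath_def successively_append_iff successively_Cons)
    moreover have "set (p @ q') = set p \<union> set q"
      using p q' by (auto simp: is_dpath_def) (metis last_in_set)
    ultimately have "is_dpath V E (p @ q')" using p q by (auto simp: is_dpath_def)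
    moreover have "hd (p @ q') = x" using p by (auto simp: is_dpath_def)
    moreover have "set (x # ys) \<subseteq> set (p @ q')"
      using p q \<open>set (p @ q') = _\<close> by (auto simp: is_dpath_def)
    ultimately show ?thesis by (intro exI[of _ "p @ q'"]) simp
  qed
qed

lemma cover':
  assumes conn: "\<And>a b. a \<in> V \<Longrightarrow> b \<in> V \<Longrightarrow> R a b \<Longrightarrow> \<exists>p. is_dpath V E p \<and> hd p = a \<and> last p = b"
    and "v0 \<in> V" "set xs \<subseteq> V" "sorted_wrt R xs"
  shows "\<exists>q. is_dpath V E q \<and> set xs \<subseteq> set q"
proof (cases "xs = []")
  case True
  then show ?thesis using assms(2) by (intro exI[of _ "[v0]"]) (auto simp: is_dpath_def)
next
  case False
  then show ?thesis using cover[OF conn] assms by blast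
qed

lemma gk_M_le:
  fixes g :: "'a \<Rightarrow> nat" and g' :: "'b \<Rightarrow> nat"
  assumes finV: "finite V" and finV': "finite V'"
    and inj: "inj_on \<phi> U" and U: "U \<subseteq> V"
    and gU: "\<And>v. v \<in> U \<Longrightarrow> g' (\<phi> v) = g v"
    and g0: "\<And>v. v \<in> V \<Longrightarrow> v \<notin> U \<Longrightarrow> g v = 0"
    and C: "\<And>p. is_dpath V E p \<Longrightarrow> \<exists>q. is_dpath V' E' q \<and> \<phi> ` (set p \<inter> U) \<subseteq> set q"
  shows "gk_M V E g t \<le> gk_M V' E' g' t"
proof -
  define S where "S = {sum g (\<Union>p\<in>set ps. set p) | ps. length ps = t \<and> (\<forall>p\<in>set ps. is_dpath V E p)}"
  define S' where "S' = {sum g' (\<Union>p\<in>set ps. set p) | ps. length ps = t \<and> (\<forall>p\<in>set ps. is_dpath V' E' p)}"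
  have "S \<subseteq> {..sum g V}"
  proof
    fix x assume "x \<in> S"
    then obtain ps where ps: "x = sum g (\<Union>p\<in>set ps. set p)" "\<forall>p\<in>set ps. is_dpath V E p"
      unfolding S_def by blast
    have "(\<Union>p\<in>set ps. set p) \<subseteq> V" using ps(2) unfolding is_dpath_def by blast
    then have "sum g (\<Union>p\<in>set ps. set p) \<le> sum g V" by (rule sum_mono2[OF finV]) simp
    then show "x \<in> {..sum g V}" using ps(1) by simp
  qed
  then have finS: "finite S" using finite_subset by blast
  have "S' \<subseteq> {..sum g' V'}"
  proof
    fix x assume "x \<in> S'"
    then obtain ps where ps: "x = sum g' (\<Union>p\<in>set ps. set p)" "\<forall>p\<in>set ps. is_dpath V' E' p"
      unfolding S'_def by blast
    have "(\<Union>p\<in>set ps. set p) \<subseteq> V'" using ps(2) unfolding is_dpath_def by blast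
    then have "sum g' (\<Union>p\<in>set ps. set p) \<le> sum g' V'" by (rule sum_mono2[OF finV']) simp
    then show "x \<in> {..sum g' V'}" using ps(1) by simp
  qed
  then have finS': "finite S'" using finite_subset by blast
  have key: "x \<le> Max (insert 0 S')" if "x \<in> S" for x
  proof -
    obtain ps where ps: "x = sum g (\<Union>p\<in>set ps. set p)" "length ps = t" "\<forall>p\<in>set ps. is_dpath V E p"
      using \<open>x \<in> S\<close> unfolding S_def by blast
    define Q where "Q p = (SOME q. is_dpath V' E' q \<and> \<phi> ` (set p \<inter> U) \<subseteq> set q)" for p
    have Qp: "is_dpath V' E' (Q p) \<and> \<phi> ` (set p \<inter> U) \<subseteq> set (Q p)" if "p \<in> set ps" for p
    proof -
      have "\<exists>q. is_dpath V' E' q \<and> \<phi> ` (set p \<inter> U) \<subseteq> set q" using C ps(3) that by blast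
      then show ?thesis unfolding Q_def by (rule someI_ex)
    qed
    define qs where "qs = map Q ps"
    have "length qs = t" "\<forall>q\<in>set qs. is_dpath V' E' q" using ps(2) Qp unfolding qs_def by auto
    then have y: "sum g' (\<Union>q\<in>set qs. set q) \<in> S'"
      unfolding S'_def by blast
    define A where "A = (\<Union>p\<in>set ps. set p)"
    have finA: "finite A" unfolding A_def by simp
    have AV: "A \<subseteq> V" unfolding A_def using ps(3) unfolding is_dpath_def by blast
    have "x = sum g A" unfolding ps(1) A_def ..
    also have "\<dots> = sum g (A \<inter> U)"
      by (rule sum.mono_neutral_right[OF finA]) (use AV g0 in force)+
    also have "\<dots> = sum (g' \<circ> \<phi>) (A \<inter> U)"
      by (rule sum.cong) (auto simp: gU)
    also have "\<dots> = sum g' (\<phi> ` (A \<inter> U))"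
      by (rule sum.reindex[symmetric]) (rule inj_on_subset[OF inj], blast)
    also have "\<dots> \<le> sum g' (\<Union>q\<in>set qs. set q)"
    proof (rule sum_mono2)
      show "finite (\<Union>q\<in>set qs. set q)" by simp
      show "\<phi> ` (A \<inter> U) \<subseteq> (\<Union>q\<in>set qs. set q)"
      proof
        fix y assume "y \<in> \<phi> ` (A \<inter> U)"
        then obtain v p where "p \<in> set ps" "v \<in> set p" "v \<in> U" "y = \<phi> v" unfolding A_def by blast
        then have "y \<in> set (Q p)" using Qp by blast
        then show "y \<in> (\<Union>q\<in>set qs. set q)" using \<open>p \<in> set ps\<close> unfolding qs_def by auto
      qed
    qed simp
    also have "\<dots> \<le> Max (insert 0 S')" using y finS' by simp
    finally show ?thesis .
  qed
  have "Max (insert 0 S) \<le> Max (insert 0 S')"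
    by (rule Max.boundedI) (use finS key in auto)
  then show ?thesis unfolding gk_M_def S_def S'_def .
qed


definition leH :: "nat \<times> nat \<Rightarrow> nat \<times> nat \<Rightarrow> bool" where
  "leH a b \<longleftrightarrow> fst b \<le> fst a \<and> snd a \<le> snd b"
definition leA :: "nat \<times> nat \<Rightarrow> nat \<times> nat \<Rightarrow> bool" where
  "leA a b \<longleftrightarrow> fst a \<le> fst b \<and> snd a \<le> snd b"

lemma transp_leH: "transp leH" by (auto simp: transp_def leH_def)
lemma transp_leA: "transp leA" by (auto simp: transp_def leA_def)

lemma fer_iff: "(i,j) \<in> fer lam \<longleftrightarrow> 1 \<le> i \<and> i \<le> length lam \<and> 1 \<le> j \<and> j \<le> lam ! (i - 1)"
  by (simp add: fer_def)

lemma diag_iff: "(i,j) \<in> diag lam k \<longleftrightarrow> (i,j) \<in> fer lam \<and> hd lam + i = k + j"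
  by (simp add: diag_def)

lemma square_iff: "(i,j) \<in> square lam k \<longleftrightarrow> (i,j) \<in> fer lam \<and>
   (\<exists>i' j'. (i',j') \<in> diag lam k \<and> i \<le> i' \<and> j \<le> j')"
  by (auto simp: square_def) (blast | force)+

context
  fixes lam :: "nat list"
  assumes P: "is_partition lam" and NE: "lam \<noteq> []"
begin

lemma sorted_le: "1 \<le> i \<Longrightarrow> i \<le> i' \<Longrightarrow> i' \<le> length lam \<Longrightarrow> lam ! (i' - 1) \<le> lam ! (i - 1)"
proof (cases "i = i'")
  case False
  assume "1 \<le> i" "i \<le> i'" "i' \<le> length lam"
  then have "i - 1 < i' - 1" "i' - 1 < length lam" using False by auto
  then show ?thesis using P unfolding is_partition_def by (auto dest: sorted_wrt_nth_less)
qed simp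

lemma hd_eq: "hd lam = lam ! 0" using NE by (simp add: hd_conv_nth)

lemma le_hd: "1 \<le> i \<Longrightarrow> i \<le> length lam \<Longrightarrow> lam ! (i - 1) \<le> hd lam"
  using sorted_le[of 1 i] hd_eq by simp

lemma pos: "1 \<le> i \<Longrightarrow> i \<le> length lam \<Longrightarrow> 1 \<le> lam ! (i - 1)"
proof -
  assume "1 \<le> i" "i \<le> length lam"
  then have "lam ! (i - 1) \<in> set lam" by (intro nth_mem) auto
  then have "lam ! (i - 1) \<noteq> 0" using P unfolding is_partition_def by metis
  then show ?thesis by simp
qed

lemma rl_eq: "row_label lam i = i + (hd lam - lam ! (i - 1))"
proof -
  have "{j. lam ! (i - 1) < j \<and> j \<le> hd lam} = {lam ! (i - 1)<..hd lam}" by auto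
  then show ?thesis unfolding row_label_def by simp
qed

definition C :: "nat \<Rightarrow> nat" where
  "C j = card {i. 1 \<le> i \<and> i \<le> length lam \<and> j \<le> lam ! (i - 1)}"

lemma cl_eq: "col_label lam j = C j + (hd lam + 1 - j)"
  unfolding col_label_def C_def ..

lemma C_fin: "finite {i. 1 \<le> i \<and> i \<le> length lam \<and> j \<le> lam ! (i - 1)}"
  by (rule finite_subset[of _ "{1..length lam}"]) auto

lemma C_le: "C j \<le> length lam"
proof -
  have "{i. 1 \<le> i \<and> i \<le> length lam \<and> j \<le> lam ! (i - 1)} \<subseteq> {1..length lam}" by auto
  then have "C j \<le> card {1..length lam}" unfolding C_def by (rule card_mono[rotated]) simp
  then show ?thesis by simp
qed

lemma fact1: "1 \<le> i \<Longrightarrow> i \<le> length lam \<Longrightarrow> j \<le> lam ! (i - 1) \<Longrightarrow> i \<le> C j"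
proof -
  assume a: "1 \<le> i" "i \<le> length lam" "j \<le> lam ! (i - 1)"
  have "{1..i} \<subseteq> {i. 1 \<le> i \<and> i \<le> length lam \<and> j \<le> lam ! (i - 1)}"
  proof
    fix x assume "x \<in> {1..i}"
    then show "x \<in> {i. 1 \<le> i \<and> i \<le> length lam \<and> j \<le> lam ! (i - 1)}"
      using a sorted_le[of x i] by auto
  qed
  then have "card {1..i} \<le> C j" unfolding C_def by (rule card_mono[OF C_fin])
  then show ?thesis by simp
qed

lemma fact2: "1 \<le> i \<Longrightarrow> i \<le> length lam \<Longrightarrow> lam ! (i - 1) < j \<Longrightarrow> C j < i"
proof -
  assume a: "1 \<le> i" "i \<le> length lam" "lam ! (i - 1) < j"
  have "{i. 1 \<le> i \<and> i \<le> length lam \<and> j \<le> lam ! (i - 1)} \<subseteq> {1..<i}"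
  proof
    fix x assume x: "x \<in> {i. 1 \<le> i \<and> i \<le> length lam \<and> j \<le> lam ! (i - 1)}"
    show "x \<in> {1..<i}"
    proof (rule ccontr)
      assume "x \<notin> {1..<i}"
      then have "i \<le> x" using x by auto
      then show False using sorted_le[of i x] a x by auto
    qed
  qed
  then have "C j \<le> card {1..<i}" unfolding C_def by (rule card_mono[rotated]) simp
  then show ?thesis using a by simp
qed

lemma C_mono: "j \<le> j' \<Longrightarrow> C j' \<le> C j"
proof -
  assume "j \<le> j'"
  then have "{i. 1 \<le> i \<and> i \<le> length lam \<and> j' \<le> lam ! (i - 1)} \<subseteq> {i. 1 \<le> i \<and> i \<le> length lam \<and> j \<le> lam ! (i - 1)}"
    by auto
  then show ?thesis unfolding C_def by (rule card_mono[OF C_fin])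
qed

lemma rl_le_iff: "1 \<le> i \<Longrightarrow> i \<le> length lam \<Longrightarrow> 1 \<le> i' \<Longrightarrow> i' \<le> length lam \<Longrightarrow>
   row_label lam i \<le> row_label lam i' \<longleftrightarrow> i \<le> i'"
proof -
  assume a: "1 \<le> i" "i \<le> length lam" "1 \<le> i'" "i' \<le> length lam"
  have h1: "lam ! (i - 1) \<le> hd lam" "lam ! (i' - 1) \<le> hd lam" using a le_hd by auto
  show ?thesis
  proof
    assume "row_label lam i \<le> row_label lam i'"
    then show "i \<le> i'" using sorted_le[of i' i] a h1 unfolding rl_eq by (cases "i \<le> i'") auto
  next
    assume "i \<le> i'"
    then show "row_label lam i \<le> row_label lam i'" using sorted_le[of i i'] a h1 unfolding rl_eq by auto
  qed
qed

lemma cl_le_iff: "1 \<le> j \<Longrightarrow> j \<le> hd lam \<Longrightarrow> 1 \<le> j' \<Longrightarrow> j' \<le> hd lam \<Longrightarrow>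
   col_label lam j \<le> col_label lam j' \<longleftrightarrow> j' \<le> j"
proof -
  assume a: "1 \<le> j" "j \<le> hd lam" "1 \<le> j'" "j' \<le> hd lam"
  show ?thesis
  proof
    assume "col_label lam j \<le> col_label lam j'"
    then show "j' \<le> j" using C_mono[of j j'] a unfolding cl_eq by (cases "j' \<le> j") auto
  next
    assume "j' \<le> j"
    then show "col_label lam j \<le> col_label lam j'" using C_mono[of j' j] a unfolding cl_eq by auto
  qed
qed

lemma inj_rl: "inj_on (row_label lam) {1..length lam}"
  unfolding inj_on_def by (metis antisym atLeastAtMost_iff le_refl rl_le_iff)

lemma inj_cl: "inj_on (col_label lam) {1..hd lam}"
  unfolding inj_on_def by (metis antisym atLeastAtMost_iff le_refl cl_le_iff)

lemma label_box_eq: "1 \<le> i \<Longrightarrow> i \<le> length lam \<Longrightarrow> 1 \<le> j \<Longrightarrow> j \<le> hd lam \<Longrightarrow>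
  label_box lam (row_label lam i) (col_label lam j) = (i, j)"
  unfolding label_box_def using the_inv_into_f_f[OF inj_rl] the_inv_into_f_f[OF inj_cl] by auto

lemma fer_range: "(i,j) \<in> fer lam \<Longrightarrow> 1 \<le> i \<and> i \<le> length lam \<and> 1 \<le> j \<and> j \<le> hd lam"
  using le_hd[of i] by (auto simp: fer_iff)

lemma cl_bound: "1 \<le> j \<Longrightarrow> col_label lam j \<le> hd lam + length lam"
  using C_le[of j] unfolding cl_eq by auto

lemma rl_ge: "i \<le> row_label lam i" unfolding rl_eq by simp

lemma sq_iff:
  assumes r: "1 \<le> i" "i \<le> length lam" "1 \<le> j" "j \<le> hd lam"
  shows "(i,j) \<in> square lam k \<longleftrightarrow> row_label lam i \<le> k \<and> k < col_label lam j"
proof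
  assume "(i,j) \<in> square lam k"
  then obtain id jd where d: "(id,jd) \<in> diag lam k" "i \<le> id" "j \<le> jd" and f: "(i,j) \<in> fer lam"
    by (auto simp: square_iff)
  have df: "1 \<le> id" "id \<le> length lam" "jd \<le> lam ! (id - 1)" "hd lam + id = k + jd"
    using d(1) by (auto simp: diag_iff fer_iff)
  have "lam ! (id - 1) \<le> lam ! (i - 1)" using sorted_le[of i id] r d df by auto
  moreover have "lam ! (i - 1) \<le> hd lam" using le_hd r by auto
  ultimately have A: "row_label lam i \<le> k" unfolding rl_eq using d df by linarith
  have "id \<le> C j" using fact1[of id j] df d by auto
  then have "k < col_label lam j" unfolding cl_eq using df d r by linarith
  with A show "row_label lam i \<le> k \<and> k < col_label lam j" by simp
next
  assume a: "row_label lam i \<le> k \<and> k < col_label lam j"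
  have h1: "lam ! (i - 1) \<le> hd lam" using le_hd r by auto
  have ja: "j \<le> lam ! (i - 1)"
  proof (rule ccontr)
    assume "\<not> j \<le> lam ! (i - 1)"
    then have "C j < i" using fact2[of i j] r by auto
    then show False using a r h1 \<open>\<not> j \<le> lam ! (i - 1)\<close> unfolding rl_eq cl_eq by linarith
  qed
  then have f: "(i,j) \<in> fer lam" using r by (simp add: fer_iff)
  show "(i,j) \<in> square lam k"
  proof (cases "hd lam + i \<le> k + j")
    case True
    define id where "id = k + j - hd lam"
    have "id \<le> C j" using a True r unfolding cl_eq id_def by linarith
    then have idl: "id \<le> length lam" using C_le[of j] by linarith
    have iid: "i \<le> id" "1 \<le> id" using True r unfolding id_def by auto
    have "j \<le> lam ! (id - 1)"
    proof (rule ccontr)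
      assume "\<not> j \<le> lam ! (id - 1)"
      then have "C j < id" using fact2[of id j] iid idl by auto
      then show False using \<open>id \<le> C j\<close> by simp
    qed
    then have "(id, j) \<in> diag lam k" using iid idl True r unfolding id_def
      by (simp add: diag_iff fer_iff)
    then show ?thesis using f iid by (auto simp: square_iff)
  next
    case False
    define jd where "jd = hd lam + i - k"
    have "jd \<le> lam ! (i - 1)" using a h1 unfolding rl_eq jd_def by linarith
    then have "(i, jd) \<in> diag lam k" using False r unfolding jd_def
      by (simp add: diag_iff fer_iff)
    moreover have "j \<le> jd" using False unfolding jd_def by linarith
    ultimately show ?thesis using f by (auto simp: square_iff)
  qed
qed

lemma square_down: "(i,j) \<in> square lam k \<Longrightarrow> 1 \<le> i' \<Longrightarrow> i' \<le> i \<Longrightarrow> 1 \<le> j' \<Longrightarrow> j' \<le> j \<Longrightarrow>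
   (i',j') \<in> square lam k"
proof -
  assume a: "(i,j) \<in> square lam k" "1 \<le> i'" "i' \<le> i" "1 \<le> j'" "j' \<le> j"
  then obtain id jd where d: "(id,jd) \<in> diag lam k" "i \<le> id" "j \<le> jd" and f: "(i,j) \<in> fer lam"
    by (auto simp: square_iff)
  have "lam ! (i - 1) \<le> lam ! (i' - 1)" using sorted_le[of i' i] a f by (auto simp: fer_iff)
  then have "(i',j') \<in> fer lam" using a f by (auto simp: fer_iff)
  then show ?thesis using d a unfolding square_iff
    by (intro conjI exI[of _ id] exI[of _ jd]) auto
qed

end


context
  fixes lam :: "nat list"
  assumes P: "is_partition lam" and NE: "lam \<noteq> []"
begin

lemma main_k:
  assumes b: "b \<in> fer lam" and kdef: "k = coord_k lam b"
  shows "gk_M (ar_k (part_n lam) k) (ar_arrow (long_cycle (part_n lam))) (rep lam f) t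
       = gk_M (square lam k) hg_arrow f t"
proof -
  define N where "N = part_n lam"
  define c where "c = long_cycle N"
  define \<phi>1 :: "nat \<times> nat \<Rightarrow> nat \<times> nat" where "\<phi>1 = (\<lambda>(i,j). (row_label lam i, col_label lam j))"
  define \<phi>2 :: "nat \<times> nat \<Rightarrow> nat \<times> nat" where "\<phi>2 = (\<lambda>(l,r). label_box lam l r)"
  define U where "U = {v \<in> ar_k N k. fst v \<in> Lset lam \<and> snd v \<in> Rset lam}"
  have Nv: "N + 1 = hd lam + length lam" unfolding N_def part_n_def using NE by (cases lam) auto
  obtain i0 j0 where b0: "b = (i0, j0)" by (cases b)
  have bsq: "b \<in> square lam k"
  proof -
    have "b \<in> diag lam k" using b le_hd[OF P NE, of i0] unfolding b0 kdef coord_k_def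
      by (auto simp: diag_iff fer_iff)
    then show ?thesis using b unfolding square_def by auto
  qed
  have sq_fer: "v \<in> square lam k \<Longrightarrow> v \<in> fer lam" for v by (auto simp: square_def)
  have sq_range: "1 \<le> fst v \<and> fst v \<le> length lam \<and> 1 \<le> snd v \<and> snd v \<le> hd lam"
    if "v \<in> square lam k" for v
    using fer_range[OF P NE, of "fst v" "snd v"] sq_fer[OF that] by simp
  have finsq: "finite (square lam k)"
    by (rule finite_subset[of _ "{..length lam} \<times> {..hd lam}"]) (auto dest: sq_range)
  have finar: "finite (ar_k N k)"
    by (rule finite_subset[of _ "{..N+1} \<times> {..N+1}"]) (auto simp: ar_k_def)
  have lb1: "\<phi>2 (\<phi>1 v) = v" if "v \<in> square lam k" for v
    using sq_range[OF that] label_box_eq[OF P NE, of "fst v" "snd v"]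
    by (cases v) (auto simp: \<phi>1_def \<phi>2_def)
  have F1: "\<phi>1 v \<in> ar_k N k" if "v \<in> square lam k" for v
  proof -
    obtain i j where v: "v = (i,j)" by (cases v)
    have r: "1 \<le> i" "i \<le> length lam" "1 \<le> j" "j \<le> hd lam" using sq_range[OF that] v by auto
    have "row_label lam i \<le> k \<and> k < col_label lam j" using sq_iff[OF P NE r] that v by simp
    moreover have "i \<le> row_label lam i" by (rule rl_ge[OF P NE])
    moreover have "col_label lam j \<le> hd lam + length lam" using cl_bound[OF P NE r(3)] .
    ultimately show ?thesis using r Nv unfolding v \<phi>1_def ar_k_def by auto
  qed
  have F3: "rep lam f (\<phi>1 v) = f v" if "v \<in> square lam k" for v
  proof -
    obtain i j where v: "v = (i,j)" by (cases v)
    have r: "1 \<le> i" "i \<le> length lam" "1 \<le> j" "j \<le> hd lam" using sq_range[OF that] v by auto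
    have "row_label lam i \<le> k \<and> k < col_label lam j" using sq_iff[OF P NE r] that v by simp
    moreover have "row_label lam i \<in> Lset lam" "col_label lam j \<in> Rset lam"
      using r unfolding Lset_def Rset_def by auto
    ultimately show ?thesis using label_box_eq[OF P NE r] unfolding v \<phi>1_def rep_def by auto
  qed
  have G1: "\<exists>i j. 1 \<le> i \<and> i \<le> length lam \<and> 1 \<le> j \<and> j \<le> hd lam \<and>
      v = (row_label lam i, col_label lam j)" if "v \<in> U" for v
    using that unfolding U_def Lset_def Rset_def by (cases v) (auto, blast)
  have G2: "\<phi>2 v \<in> square lam k \<and> \<phi>1 (\<phi>2 v) = v" if vU: "v \<in> U" for v
  proof -
    obtain i j where r: "1 \<le> i" "i \<le> length lam" "1 \<le> j" "j \<le> hd lam"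
      and v: "v = (row_label lam i, col_label lam j)" using G1[OF vU] by blast
    have "\<phi>2 v = (i,j)" using label_box_eq[OF P NE r] unfolding v \<phi>2_def by simp
    moreover have "row_label lam i \<le> k \<and> k < col_label lam j"
      using vU unfolding U_def ar_k_def v by auto
    ultimately show ?thesis using sq_iff[OF P NE r] unfolding v \<phi>1_def by simp
  qed
  have H_sorted: "sorted_wrt leH p" if "is_dpath (square lam k) hg_arrow p" for p
    by (rule path_sorted[OF that _ transp_leH]) (auto simp: hg_arrow_def leH_def)
  have A_sorted: "sorted_wrt leA p" if "is_dpath (ar_k N k) (ar_arrow c) p" for p
  proof (rule path_sorted[OF that _ transp_leA])
    fix x y assume "x \<in> ar_k N k" "y \<in> ar_k N k" "ar_arrow c x y"
    then show "leA x y" unfolding ar_arrow_def c_def long_cycle_def ar_k_def leA_def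
      by (auto split: if_splits)
  qed
  have H_conn: "\<exists>p. is_dpath (square lam k) hg_arrow p \<and> hd p = a \<and> last p = b'"
    if "a \<in> square lam k" "b' \<in> square lam k" "leH a b'" for a b'
  proof (rule connect[where mu = "\<lambda>a b. (fst a - fst b) + (snd b - snd a)" and R = leH
      and E = hg_arrow and V = "square lam k", OF _ that])
    fix a b assume ab: "a \<in> square lam k" "b \<in> square lam k" "leH a b" "a \<noteq> b"
    show "\<exists>a'\<in>square lam k. hg_arrow a a' \<and> leH a' b \<and>
       (fst a' - fst b) + (snd b - snd a') < (fst a - fst b) + (snd b - snd a)"
    proof (cases "fst b < fst a")
      case True
      have "(fst a - 1, snd a) \<in> square lam k"
        using square_down[OF P NE, of "fst a" "snd a" k "fst a - 1" "snd a"] ab(1)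
          sq_range[OF ab(1)] sq_range[OF ab(2)] True
        by (simp add: Suc_le_eq)
      then show ?thesis using True ab
        by (intro bexI[of _ "(fst a - 1, snd a)"]) (auto simp: hg_arrow_def leH_def)
    next
      case False
      then have "fst a = fst b" "snd a < snd b" using ab by (auto simp: leH_def prod_eq_iff)
      have "(fst a, snd a + 1) \<in> square lam k"
        using square_down[OF P NE, of "fst b" "snd b" k "fst a" "snd a + 1"] ab sq_range[OF ab(2)]
          sq_range[OF ab(1)] \<open>fst a = fst b\<close> \<open>snd a < snd b\<close> by simp
      then show ?thesis using \<open>fst a = fst b\<close> \<open>snd a < snd b\<close> ab
        by (intro bexI[of _ "(fst a, snd a + 1)"]) (auto simp: hg_arrow_def leH_def)
    qed
  qed
  have A_conn: "\<exists>p. is_dpath (ar_k N k) (ar_arrow c) p \<and> hd p = a \<and> last p = b'"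
    if "a \<in> ar_k N k" "b' \<in> ar_k N k" "leA a b'" for a b'
  proof (rule connect[where mu = "\<lambda>a b. (fst b - fst a) + (snd b - snd a)" and R = leA
      and E = "ar_arrow c" and V = "ar_k N k", OF _ that])
    fix a b assume ab: "a \<in> ar_k N k" "b \<in> ar_k N k" "leA a b" "a \<noteq> b"
    show "\<exists>a'\<in>ar_k N k. ar_arrow c a a' \<and> leA a' b \<and>
       (fst b - fst a') + (snd b - snd a') < (fst b - fst a) + (snd b - snd a)"
    proof (cases "fst a < fst b")
      case True
      then show ?thesis using ab
        by (intro bexI[of _ "(fst a + 1, snd a)"])
          (auto simp: ar_arrow_def leA_def ar_k_def c_def long_cycle_def)
    next
      case False
      then have "fst a = fst b" "snd a < snd b" using ab by (auto simp: leA_def prod_eq_iff)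
      then show ?thesis using ab
        by (intro bexI[of _ "(fst a, snd a + 1)"])
          (auto simp: ar_arrow_def leA_def ar_k_def c_def long_cycle_def)
    qed
  qed
  have le1: "gk_M (square lam k) hg_arrow f t \<le> gk_M (ar_k N k) (ar_arrow c) (rep lam f) t"
  proof (rule gk_M_le[where \<phi> = \<phi>1 and U = "square lam k" and g = f and g' = "rep lam f"
      and V = "square lam k" and V' = "ar_k N k" and E = hg_arrow and E' = "ar_arrow c",
      OF finsq finar _ subset_refl F3])
    show "inj_on \<phi>1 (square lam k)" by (rule inj_on_inverseI[of _ \<phi>2]) (rule lb1)
    show "\<And>v. v \<in> square lam k \<Longrightarrow> v \<notin> square lam k \<Longrightarrow> f v = 0" by simp
    fix p assume p: "is_dpath (square lam k) hg_arrow p"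
    define xs where "xs = rev (map \<phi>1 p)"
    have ps: "set p \<subseteq> square lam k" using p by (simp add: is_dpath_def)
    have "sorted_wrt leA xs"
      unfolding xs_def sorted_wrt_rev sorted_wrt_map
    proof (rule sorted_wrt_mono_rel[OF _ H_sorted[OF p]])
      fix x y assume xy: "x \<in> set p" "y \<in> set p" "leH x y"
      have rx: "1 \<le> fst x \<and> fst x \<le> length lam \<and> 1 \<le> snd x \<and> snd x \<le> hd lam"
        using sq_range xy ps by blast
      have ry: "1 \<le> fst y \<and> fst y \<le> length lam \<and> 1 \<le> snd y \<and> snd y \<le> hd lam"
        using sq_range xy ps by blast
      show "leA (\<phi>1 y) (\<phi>1 x)" using xy(3) rl_le_iff[OF P NE, of "fst y" "fst x"]
          cl_le_iff[OF P NE, of "snd x" "snd y"] rx ry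
        unfolding leA_def leH_def \<phi>1_def by (auto simp: case_prod_beta)
    qed
    moreover have "set xs \<subseteq> ar_k N k" using F1 ps unfolding xs_def by auto
    ultimately obtain q where "is_dpath (ar_k N k) (ar_arrow c) q" "set xs \<subseteq> set q"
      using cover'[OF A_conn F1[OF bsq]] by blast
    then show "\<exists>q. is_dpath (ar_k N k) (ar_arrow c) q \<and> \<phi>1 ` (set p \<inter> square lam k) \<subseteq> set q"
      unfolding xs_def by auto
  qed
  have le2: "gk_M (ar_k N k) (ar_arrow c) (rep lam f) t \<le> gk_M (square lam k) hg_arrow f t"
  proof (rule gk_M_le[where \<phi> = \<phi>2 and U = U and g' = f and g = "rep lam f"
      and V' = "square lam k" and V = "ar_k N k" and E' = hg_arrow and E = "ar_arrow c",
      OF finar finsq])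
    show "inj_on \<phi>2 U" by (rule inj_on_inverseI[of _ \<phi>1]) (use G2 in blast)
    show "U \<subseteq> ar_k N k" unfolding U_def by auto
    show "f (\<phi>2 v) = rep lam f v" if "v \<in> U" for v
      using that unfolding U_def ar_k_def rep_def \<phi>2_def by (cases v) auto
    show "rep lam f v = 0" if "v \<in> ar_k N k" "v \<notin> U" for v
      using that unfolding U_def rep_def by (cases v) auto
    fix p assume p: "is_dpath (ar_k N k) (ar_arrow c) p"
    define xs where "xs = rev (map \<phi>2 (filter (\<lambda>v. v \<in> U) p))"
    have "sorted_wrt leH xs"
      unfolding xs_def sorted_wrt_rev sorted_wrt_map
    proof (rule sorted_wrt_mono_rel[OF _ sorted_wrt_filter[OF A_sorted[OF p]]])
      fix x y assume xy: "x \<in> set (filter (\<lambda>v. v \<in> U) p)" "y \<in> set (filter (\<lambda>v. v \<in> U) p)" "leA x y"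
      then have "x \<in> U" "y \<in> U" by auto
      obtain i j where rx: "1 \<le> i" "i \<le> length lam" "1 \<le> j" "j \<le> hd lam"
        and x: "x = (row_label lam i, col_label lam j)" using G1[OF \<open>x \<in> U\<close>] by blast
      obtain i' j' where ry: "1 \<le> i'" "i' \<le> length lam" "1 \<le> j'" "j' \<le> hd lam"
        and y: "y = (row_label lam i', col_label lam j')" using G1[OF \<open>y \<in> U\<close>] by blast
      show "leH (\<phi>2 y) (\<phi>2 x)" using xy(3) rl_le_iff[OF P NE rx(1,2) ry(1,2)]
          cl_le_iff[OF P NE rx(3,4) ry(3,4)] label_box_eq[OF P NE rx] label_box_eq[OF P NE ry]
        unfolding leA_def leH_def \<phi>2_def x y by auto
    qed
    moreover have "set xs \<subseteq> square lam k" using G2 unfolding xs_def by auto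
    ultimately obtain q where "is_dpath (square lam k) hg_arrow q" "set xs \<subseteq> set q"
      using cover'[OF H_conn bsq] by blast
    then show "\<exists>q. is_dpath (square lam k) hg_arrow q \<and> \<phi>2 ` (set p \<inter> U) \<subseteq> set q"
      unfolding xs_def by auto
  qed
  show ?thesis using le1 le2 unfolding N_def c_def by simp
qed

end

theorem proposition6p5:
  fixes lam :: "nat list" and n :: nat
  assumes "is_partition lam" and "lam \<noteq> []"
    and "hd lam + length lam - 1 = n" and "n \<ge> 1"
  shows "RSK lam (long_cycle n) = HG lam"
proof (intro ext)
  fix f b
  have pn: "part_n lam = n" using assms(3) unfolding part_n_def .
  show "RSK lam (long_cycle n) f b = HG lam f b"
  proof (cases "b \<in> fer lam")
    case True
    then show ?thesis unfolding RSK_def HG_def gk_def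
      using main_k[OF assms(1,2) True refl] pn by simp
  qed (simp add: RSK_def HG_def)
qed

end
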